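(* Let $U$ be a proper graded submodule of $M$. Then $U$ is a graded weakly $J_{gr}$-semiprime submodule of $M$ if and only if for every graded submodule $K$ of $M$, every $r_g\in h(R)$ and every $n\in\mathbb{Z}^+$ with $\{0\}\neq\langle r_g\rangle^nK\subseteq U$, we have $\langle r_g\rangle K\subseteq U+J_{gr}(M)$.
   Context: Standing conventions: $\Gamma$ is a group, $R=\bigoplus_{g\in\Gamma}R_g$ is a commutative $\Gamma$-graded ring with identity, and $M=\bigoplus_{g\in\Gamma}M_g$ is a unitary $\Gamma$-graded $R$-module. $h(R)=\bigcup_gR_g$, $h(M)=\bigcup_gM_g$ are the homogeneous elements; $r_g$, $m_h$ denote homogeneous elements. A submodule $U$ is graded if $U=\bigoplus_g(U\cap M_g)$. A graded submodule $U\neq M$ is Gr-maximal if every graded submodule $L$ with $U\subseteq L\subseteq M$ equals $U$ or $M$. $J_{gr}(M)$ is the intersection of all Gr-maximal submodules of $M$ ($=M$ if there are none). A proper graded submodule $U$ of $M$ is graded weakly $J_{gr}$-semiprime if whenever $r_g\in h(R)$, $m_h\in h(M)$, $n\in\mathbb{Z}^+$ and $0\neq r_g^nm_h\in U$, then $r_gm_h\in U+J_{gr}(M)$. $\langle a\rangle$ is the ideal generated by $a$. *)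

theory Defs
  imports Complex_Main
begin

text \<open>Grading group \<Gamma> is a type 'g of class group_add (written additively, not
necessarily commutative; the neutral element 0 plays the role of e).\<close>

definition add_subgroup :: "'a::ab_group_add set \<Rightarrow> bool" where
  "add_subgroup A \<longleftrightarrow> 0 \<in> A \<and> (\<forall>x\<in>A. \<forall>y\<in>A. x + y \<in> A) \<and> (\<forall>x\<in>A. - x \<in> A)"

definition is_direct_sum :: "'a::ab_group_add set \<Rightarrow> ('g \<Rightarrow> 'a set) \<Rightarrow> bool" where
  "is_direct_sum X A \<longleftrightarrow>
     (\<forall>x\<in>X. \<exists>!f. finite {g. f g \<noteq> 0} \<and> (\<forall>g. f g \<in> A g) \<and> x = (\<Sum>g | f g \<noteq> 0. f g))"

definition graded_ring :: "('g::group_add \<Rightarrow> 'r::comm_ring_1 set) \<Rightarrow> bool" where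
  "graded_ring RG \<longleftrightarrow>
     (\<forall>g. add_subgroup (RG g)) \<and> is_direct_sum UNIV RG \<and>
     (\<forall>g h. \<forall>a\<in>RG g. \<forall>b\<in>RG h. a * b \<in> RG (g + h))"

definition graded_module ::
  "('g::group_add \<Rightarrow> 'r::comm_ring_1 set) \<Rightarrow> ('g \<Rightarrow> 'm::ab_group_add set) \<Rightarrow> ('r \<Rightarrow> 'm \<Rightarrow> 'm) \<Rightarrow> bool" where
  "graded_module RG MG scale \<longleftrightarrow>
     module scale \<and> graded_ring RG \<and>
     (\<forall>g. add_subgroup (MG g)) \<and> is_direct_sum UNIV MG \<and>
     (\<forall>g h. \<forall>a\<in>RG g. \<forall>m\<in>MG h. scale a m \<in> MG (g + h))"

definition homog :: "('g \<Rightarrow> 'a set) \<Rightarrow> 'a set" where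
  "homog A = (\<Union>g. A g)"

definition graded_submodule ::
  "('g \<Rightarrow> 'm::ab_group_add set) \<Rightarrow> ('r::comm_ring_1 \<Rightarrow> 'm \<Rightarrow> 'm) \<Rightarrow> 'm set \<Rightarrow> bool" where
  "graded_submodule MG scale U \<longleftrightarrow>
     module.subspace scale U \<and> is_direct_sum U (\<lambda>g. U \<inter> MG g)"

definition gr_maximal ::
  "('g \<Rightarrow> 'm::ab_group_add set) \<Rightarrow> ('r::comm_ring_1 \<Rightarrow> 'm \<Rightarrow> 'm) \<Rightarrow> 'm set \<Rightarrow> bool" where
  "gr_maximal MG scale U \<longleftrightarrow>
     graded_submodule MG scale U \<and> U \<noteq> UNIV \<and>
     (\<forall>L. graded_submodule MG scale L \<and> U \<subseteq> L \<longrightarrow> L = U \<or> L = UNIV)"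

text \<open>J_gr(M): intersection of all Gr-maximal submodules (UNIV if there are none).\<close>
definition Jgr ::
  "('g \<Rightarrow> 'm::ab_group_add set) \<Rightarrow> ('r::comm_ring_1 \<Rightarrow> 'm \<Rightarrow> 'm) \<Rightarrow> 'm set" where
  "Jgr MG scale = \<Inter> {U. gr_maximal MG scale U}"

definition set_plus :: "'m::ab_group_add set \<Rightarrow> 'm set \<Rightarrow> 'm set" where
  "set_plus U V = {u + v | u v. u \<in> U \<and> v \<in> V}"

definition graded_weakly_Jgr_semiprime ::
  "('g \<Rightarrow> 'r::comm_ring_1 set) \<Rightarrow> ('g \<Rightarrow> 'm::ab_group_add set) \<Rightarrow> ('r \<Rightarrow> 'm \<Rightarrow> 'm) \<Rightarrow> 'm set \<Rightarrow> bool" where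
  "graded_weakly_Jgr_semiprime RG MG scale U \<longleftrightarrow>
     graded_submodule MG scale U \<and> U \<noteq> UNIV \<and>
     (\<forall>r\<in>homog RG. \<forall>m\<in>homog MG. \<forall>n::nat. n > 0 \<longrightarrow>
        scale (r ^ n) m \<noteq> 0 \<longrightarrow> scale (r ^ n) m \<in> U \<longrightarrow>
        scale r m \<in> set_plus U (Jgr MG scale))"

definition pideal :: "'r::comm_ring_1 \<Rightarrow> 'r set" where
  "pideal a = {r * a | r. True}"

definition ideal_prod :: "'r::comm_ring_1 set \<Rightarrow> 'r set \<Rightarrow> 'r set" where
  "ideal_prod I J = module.span ((*) :: 'r \<Rightarrow> 'r \<Rightarrow> 'r) {i * j | i j. i \<in> I \<and> j \<in> J}"

fun ideal_pow :: "'r::comm_ring_1 set \<Rightarrow> nat \<Rightarrow> 'r set" where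
  "ideal_pow I 0 = UNIV"
| "ideal_pow I (Suc n) = ideal_prod I (ideal_pow I n)"

definition ideal_smult ::
  "('r::comm_ring_1 \<Rightarrow> 'm::ab_group_add \<Rightarrow> 'm) \<Rightarrow> 'r set \<Rightarrow> 'm set \<Rightarrow> 'm set" where
  "ideal_smult scale I K = module.span scale {scale i k | i k. i \<in> I \<and> k \<in> K}"

end

theory Submission
  imports Defs
begin

lemma mult_module: "module ((*) :: 'r::comm_ring_1 \<Rightarrow> 'r \<Rightarrow> 'r)"
  by unfold_locales (auto simp: algebra_simps)

lemma pideal_self: "(a::'r::comm_ring_1) \<in> pideal a"
  unfolding pideal_def by (rule CollectI, rule exI[where x=1]) simp

lemma set_plusI: "u \<in> A \<Longrightarrow> v \<in> B \<Longrightarrow> u + v \<in> set_plus A B"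
  unfolding set_plus_def by blast

lemma pideal_span: "pideal (a::'r::comm_ring_1) = module.span (*) {a}"
proof -
  interpret module "(*) :: 'r \<Rightarrow> 'r \<Rightarrow> 'r" by (rule mult_module)
  show ?thesis unfolding span_singleton pideal_def by auto
qed

lemma ideal_prod_pideal:
  "ideal_prod (pideal (a::'r::comm_ring_1)) (pideal b) = pideal (a * b)"
proof -
  interpret module "(*) :: 'r \<Rightarrow> 'r \<Rightarrow> 'r" by (rule mult_module)
  have sub: "subspace (pideal (a*b))" by (simp add: pideal_span)
  show ?thesis unfolding ideal_prod_def
  proof
    show "span {i * j |i j. i \<in> pideal a \<and> j \<in> pideal b} \<subseteq> pideal (a * b)"
      apply (rule span_minimal[OF _ sub])
      apply (auto simp: pideal_def)
      by (metis mult.assoc mult.left_commute)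
  next
    have "a * b \<in> {i * j |i j. i \<in> pideal a \<and> j \<in> pideal b}"
      using pideal_self[of a] pideal_self[of b] by blast
    then show "pideal (a * b) \<subseteq> span {i * j |i j. i \<in> pideal a \<and> j \<in> pideal b}"
      unfolding pideal_span by (intro span_mono) auto
  qed
qed

lemma ideal_pow_pideal: "ideal_pow (pideal (r::'r::comm_ring_1)) n = pideal (r ^ n)"
proof (induction n)
  case 0
  then show ?case by (auto simp: pideal_def intro!: exI[of _ "_"])
next
  case (Suc n)
  then show ?case by (simp add: ideal_prod_pideal)
qed

lemma ideal_smult_pideal:
  assumes "module scale" "module.subspace scale K"
  shows "ideal_smult scale (pideal c) K = (\<lambda>k. scale c k) ` K"
proof -
  interpret module scale by fact
  have sub: "subspace ((\<lambda>k. scale c k) ` K)"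
  proof (rule subspaceI)
    show "0 \<in> (\<lambda>k. scale c k) ` K"
      using subspace_0[OF assms(2)] by (metis image_eqI scale_zero_right)
  next
    fix x y assume "x \<in> (\<lambda>k. scale c k) ` K" "y \<in> (\<lambda>k. scale c k) ` K"
    then obtain a b where "a \<in> K" "b \<in> K" "x = scale c a" "y = scale c b" by auto
    then show "x + y \<in> (\<lambda>k. scale c k) ` K"
      using subspace_add[OF assms(2)] by (metis image_eqI scale_right_distrib)
  next
    fix d x assume "x \<in> (\<lambda>k. scale c k) ` K"
    then obtain a where "a \<in> K" "x = scale c a" by auto
    then show "scale d x \<in> (\<lambda>k. scale c k) ` K"
      using subspace_scale[OF assms(2)] by (metis image_eqI scale_left_commute)
  qed
  show ?thesis unfolding ideal_smult_def
  proof
    show "span {scale i k |i k. i \<in> pideal c \<and> k \<in> K} \<subseteq> (\<lambda>k. scale c k) ` K"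
      apply (rule span_minimal[OF _ sub])
      apply (auto simp: pideal_def)
      using subspace_scale[OF assms(2)] by (metis image_eqI scale_left_commute scale_scale)
  next
    show "(\<lambda>k. scale c k) ` K \<subseteq> span {scale i k |i k. i \<in> pideal c \<and> k \<in> K}"
    proof
      fix x assume "x \<in> (\<lambda>k. scale c k) ` K"
      then obtain k where "k \<in> K" "x = scale c k" by auto
      then have "x \<in> {scale i k |i k. i \<in> pideal c \<and> k \<in> K}"
        using pideal_self[of c] by blast
      then show "x \<in> span {scale i k |i k. i \<in> pideal c \<and> k \<in> K}" by (rule span_base)
    qed
  qed
qed

lemma sum_support:
  assumes "finite T" "{g. f g \<noteq> 0} \<subseteq> T"
  shows "(\<Sum>g | f g \<noteq> 0. f g) = sum f T"
  by (rule sum.mono_neutral_left) (use assms in auto)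

lemma direct_sum_from_univ:
  assumes "is_direct_sum UNIV MG" "\<And>g. S g \<subseteq> MG g"
    and "\<And>x. x \<in> X \<Longrightarrow> \<exists>f. finite {g. f g \<noteq> 0} \<and> (\<forall>g. f g \<in> S g) \<and> x = (\<Sum>g | f g \<noteq> 0. f g)"
  shows "is_direct_sum X S"
  unfolding is_direct_sum_def
proof
  fix x assume x: "x \<in> X"
  obtain f where f: "finite {g. f g \<noteq> 0}" "\<forall>g. f g \<in> S g" "x = (\<Sum>g | f g \<noteq> 0. f g)"
    using assms(3)[OF x] by blast
  have u: "\<exists>!f. finite {g. f g \<noteq> 0} \<and> (\<forall>g. f g \<in> MG g) \<and> x = (\<Sum>g | f g \<noteq> 0. f g)"
    using assms(1) unfolding is_direct_sum_def by blast
  show "\<exists>!f. finite {g. f g \<noteq> 0} \<and> (\<forall>g. f g \<in> S g) \<and> x = (\<Sum>g | f g \<noteq> 0. f g)"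
  proof (rule ex1I[of _ f])
    show "finite {g. f g \<noteq> 0} \<and> (\<forall>g. f g \<in> S g) \<and> x = (\<Sum>g | f g \<noteq> 0. f g)" using f by blast
  next
    fix f' assume "finite {g. f' g \<noteq> 0} \<and> (\<forall>g. f' g \<in> S g) \<and> x = (\<Sum>g | f' g \<noteq> 0. f' g)"
    then show "f' = f" using u f assms(2) by blast
  qed
qed

lemma set_plus_subspace:
  assumes "module scale" "module.subspace scale A" "module.subspace scale B"
  shows "module.subspace scale (set_plus A B)"
proof -
  interpret module scale by fact
  show ?thesis
    unfolding set_plus_def
  proof (rule subspaceI)
    show "0 \<in> {u + v |u v. u \<in> A \<and> v \<in> B}"
      using subspace_0[OF assms(2)] subspace_0[OF assms(3)] by force
  next
    fix x y assume "x \<in> {u + v |u v. u \<in> A \<and> v \<in> B}" "y \<in> {u + v |u v. u \<in> A \<and> v \<in> B}"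
    then obtain a b a' b' where "a \<in> A" "b \<in> B" "a' \<in> A" "b' \<in> B" "x = a + b" "y = a' + b'" by auto
    moreover have "x + y = (a + a') + (b + b')" using \<open>x = a + b\<close> \<open>y = a' + b'\<close>
      by (simp add: algebra_simps)
    ultimately show "x + y \<in> {u + v |u v. u \<in> A \<and> v \<in> B}"
      using subspace_add[OF assms(2)] subspace_add[OF assms(3)] by blast
  next
    fix c x assume "x \<in> {u + v |u v. u \<in> A \<and> v \<in> B}"
    then obtain a b where "a \<in> A" "b \<in> B" "x = a + b" by auto
    moreover have "scale c x = scale c a + scale c b" using \<open>x = a + b\<close>
      by (simp add: scale_right_distrib)
    ultimately show "scale c x \<in> {u + v |u v. u \<in> A \<and> v \<in> B}"
      using subspace_scale[OF assms(2)] subspace_scale[OF assms(3)] by blast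
  qed
qed

lemma set_plus_graded:
  assumes gm: "graded_module RG MG scale"
    and A: "graded_submodule MG scale A" and B: "graded_submodule MG scale B"
  shows "graded_submodule MG scale (set_plus A B)"
proof -
  have ms: "module scale" and du: "is_direct_sum UNIV MG" and sg: "\<And>g. add_subgroup (MG g)"
    using gm unfolding graded_module_def by auto
  interpret module scale by fact
  have sA: "subspace A" and sB: "subspace B" using A B unfolding graded_submodule_def by auto
  have dA: "is_direct_sum A (\<lambda>g. A \<inter> MG g)" and dB: "is_direct_sum B (\<lambda>g. B \<inter> MG g)"
    using A B unfolding graded_submodule_def by auto
  show ?thesis unfolding graded_submodule_def
  proof
    show "subspace (set_plus A B)" by (rule set_plus_subspace[OF ms sA sB])
    show "is_direct_sum (set_plus A B) (\<lambda>g. set_plus A B \<inter> MG g)"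
    proof (rule direct_sum_from_univ[OF du])
      fix x assume "x \<in> set_plus A B"
      then obtain a b where ab: "a \<in> A" "b \<in> B" "x = a + b" unfolding set_plus_def by auto
      obtain fa where fa: "finite {g. fa g \<noteq> 0}" "\<forall>g. fa g \<in> A \<inter> MG g" "a = (\<Sum>g | fa g \<noteq> 0. fa g)"
        using dA ab(1) unfolding is_direct_sum_def by blast
      obtain fb where fb: "finite {g. fb g \<noteq> 0}" "\<forall>g. fb g \<in> B \<inter> MG g" "b = (\<Sum>g | fb g \<noteq> 0. fb g)"
        using dB ab(2) unfolding is_direct_sum_def by blast
      define T where "T = {g. fa g \<noteq> 0} \<union> {g. fb g \<noteq> 0}"
      have fT: "finite T" using fa fb T_def by auto
      have supp: "{g. fa g + fb g \<noteq> 0} \<subseteq> T" unfolding T_def by auto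
      show "\<exists>f. finite {g. f g \<noteq> 0} \<and> (\<forall>g. f g \<in> set_plus A B \<inter> MG g) \<and> x = (\<Sum>g | f g \<noteq> 0. f g)"
      proof (intro exI conjI allI)
        show "finite {g. fa g + fb g \<noteq> 0}" using fT supp finite_subset by blast
        fix g
        show "fa g + fb g \<in> set_plus A B \<inter> MG g"
          using fa(2) fb(2) sg[of g] unfolding set_plus_def add_subgroup_def by blast
      next
        have "(\<Sum>g | fa g + fb g \<noteq> 0. fa g + fb g) = (\<Sum>g\<in>T. fa g + fb g)"
          by (rule sum_support[OF fT supp])
        also have "\<dots> = sum fa T + sum fb T" by (simp add: sum.distrib)
        also have "sum fa T = a" using fa(3) sum_support[OF fT, of fa] T_def by auto
        also have "sum fb T = b" using fb(3) sum_support[OF fT, of fb] T_def by auto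
        finally show "x = (\<Sum>g | fa g + fb g \<noteq> 0. fa g + fb g)" using ab by simp
      qed
    qed auto
  qed
qed

lemma cyclic_graded:
  assumes gm: "graded_module RG MG scale" and m: "m \<in> MG g0"
  shows "graded_submodule MG scale (range (\<lambda>s. scale s m))"
proof -
  have ms: "module scale" and du: "is_direct_sum UNIV MG"
    and gr: "graded_ring RG" and mul: "\<forall>g h. \<forall>a\<in>RG g. \<forall>m\<in>MG h. scale a m \<in> MG (g + h)"
    using gm unfolding graded_module_def by auto
  have dR: "is_direct_sum UNIV RG" using gr unfolding graded_ring_def by auto
  interpret module scale by fact
  show ?thesis unfolding graded_submodule_def
  proof
    show "subspace (range (\<lambda>s. scale s m))" using span_singleton[of m] subspace_span by metis
    show "is_direct_sum (range (\<lambda>s. scale s m)) (\<lambda>g. range (\<lambda>s. scale s m) \<inter> MG g)"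
    proof (rule direct_sum_from_univ[OF du])
      fix x assume "x \<in> range (\<lambda>s. scale s m)"
      then obtain s where xs: "x = scale s m" by auto
      obtain sf where sf: "finite {g. sf g \<noteq> 0}" "\<forall>g. sf g \<in> RG g" "s = (\<Sum>g | sf g \<noteq> 0. sf g)"
        using dR unfolding is_direct_sum_def by blast
      define S where "S = {g. sf g \<noteq> 0}"
      define f where "f = (\<lambda>g. scale (sf (g - g0)) m)"
      have fS: "finite ((\<lambda>h. h + g0) ` S)" using sf(1) S_def by auto
      have supp: "{g. f g \<noteq> 0} \<subseteq> (\<lambda>h. h + g0) ` S"
      proof
        fix g assume "g \<in> {g. f g \<noteq> 0}"
        then have "sf (g - g0) \<noteq> 0" unfolding f_def by auto
        then show "g \<in> (\<lambda>h. h + g0) ` S" unfolding S_def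
          by (intro image_eqI[of _ _ "g - g0"]) auto
      qed
      show "\<exists>f. finite {g. f g \<noteq> 0} \<and> (\<forall>g. f g \<in> range (\<lambda>s. scale s m) \<inter> MG g) \<and> x = (\<Sum>g | f g \<noteq> 0. f g)"
      proof (intro exI conjI allI)
        show "finite {g. f g \<noteq> 0}" using fS supp finite_subset by blast
        fix g
        have "scale (sf (g - g0)) m \<in> MG ((g - g0) + g0)" using mul sf(2) m by blast
        then show "f g \<in> range (\<lambda>s. scale s m) \<inter> MG g" unfolding f_def by simp
      next
        have "(\<Sum>g | f g \<noteq> 0. f g) = sum f ((\<lambda>h. h + g0) ` S)" by (rule sum_support[OF fS supp])
        also have "\<dots> = (\<Sum>h\<in>S. f (h + g0))"
          by (rule sum.reindex_cong[where l="\<lambda>h. h + g0"]) (auto simp: inj_on_def)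
        also have "\<dots> = (\<Sum>h\<in>S. scale (sf h) m)" unfolding f_def by simp
        also have "\<dots> = scale (sum sf S) m" by (simp add: scale_sum_left)
        also have "\<dots> = x" using xs sf(3) S_def by simp
        finally show "x = (\<Sum>g | f g \<noteq> 0. f g)" by simp
      qed
    qed auto
  qed
qed

lemma key:
  assumes gm: "graded_module RG MG scale" and r: "r \<in> homog RG" and m: "m \<in> homog MG"
    and z: "scale (r ^ n) m = 0"
  shows "scale r m \<in> Jgr MG scale"
  unfolding Jgr_def
proof
  fix N assume "N \<in> {U. gr_maximal MG scale U}"
  then have N: "gr_maximal MG scale N" by simp
  have ms: "module scale" and mul: "\<forall>g h. \<forall>a\<in>RG g. \<forall>m\<in>MG h. scale a m \<in> MG (g + h)"
    using gm unfolding graded_module_def by auto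
  interpret module scale by fact
  have gN: "graded_submodule MG scale N" and sN: "subspace N" using N
    unfolding gr_maximal_def graded_submodule_def by auto
  show "scale r m \<in> N"
  proof (rule ccontr)
    assume nin: "scale r m \<notin> N"
    obtain g h where "r \<in> RG g" "m \<in> MG h" using r m unfolding homog_def by auto
    then have "scale r m \<in> MG (g + h)" using mul by blast
    then have gC: "graded_submodule MG scale (range (\<lambda>s. scale s (scale r m)))"
      by (rule cyclic_graded[OF gm])
    define L where "L = set_plus N (range (\<lambda>s. scale s (scale r m)))"
    have gL: "graded_submodule MG scale L" unfolding L_def by (rule set_plus_graded[OF gm gN gC])
    have "N \<subseteq> L"
    proof
      fix x assume "x \<in> N"
      then have "x + scale 0 (scale r m) \<in> L" unfolding L_def by (intro set_plusI rangeI)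
      then show "x \<in> L" by simp
    qed
    have "0 + scale 1 (scale r m) \<in> L" unfolding L_def using subspace_0[OF sN]
      by (intro set_plusI rangeI)
    then have "scale r m \<in> L" by simp
    then have "L \<noteq> N" using nin by auto
    then have "L = UNIV" using N gL \<open>N \<subseteq> L\<close> unfolding gr_maximal_def by blast
    then have "m \<in> L" by simp
    then obtain a s where as: "a \<in> N" "m = a + scale s (scale r m)"
      unfolding L_def set_plus_def by auto
    have "m - scale (s * r) m = a" using as(2) by (metis add_diff_cancel scale_scale)
    then have step: "m - scale (s * r) m \<in> N" using as(1) by simp
    have ind: "m - scale ((s * r) ^ k) m \<in> N" for k
    proof (induction k)
      case 0
      then show ?case using subspace_0[OF sN] by simp
    next
      case (Suc k)
      have "m - scale ((s * r) ^ Suc k) m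
          = (m - scale ((s * r) ^ k) m) + scale ((s * r) ^ k) (m - scale (s * r) m)"
        by (simp add: algebra_simps scale_right_diff_distrib mult.commute)
      also have "\<dots> \<in> N" using Suc step subspace_add[OF sN] subspace_scale[OF sN] by blast
      finally show ?case .
    qed
    have "scale ((s * r) ^ n) m = 0"
      using z by (simp add: power_mult_distrib flip: scale_scale)
    then have "m \<in> N" using ind[of n] by simp
    then have "scale r m \<in> N" using subspace_scale[OF sN] by blast
    then show False using nin by simp
  qed
qed

lemma Jgr_subspace:
  assumes "module scale"
  shows "module.subspace scale (Jgr MG scale)"
proof -
  interpret module scale by fact
  show ?thesis unfolding Jgr_def
    by (rule subspace_Inter) (auto simp: gr_maximal_def graded_submodule_def)
qed

theorem theorem2p4:
  fixes RG :: "'g::group_add \<Rightarrow> 'r::comm_ring_1 set"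
    and MG :: "'g \<Rightarrow> 'm::ab_group_add set"
    and scale :: "'r \<Rightarrow> 'm \<Rightarrow> 'm"
    and U :: "'m set"
  assumes "graded_module RG MG scale"
    and "graded_submodule MG scale U"
    and "U \<noteq> UNIV"
  shows "graded_weakly_Jgr_semiprime RG MG scale U \<longleftrightarrow>
    (\<forall>K. graded_submodule MG scale K \<longrightarrow>
      (\<forall>r\<in>homog RG. \<forall>n::nat. n > 0 \<longrightarrow>
         ideal_smult scale (ideal_pow (pideal r) n) K \<noteq> {0} \<longrightarrow>
         ideal_smult scale (ideal_pow (pideal r) n) K \<subseteq> U \<longrightarrow>
         ideal_smult scale (pideal r) K \<subseteq> set_plus U (Jgr MG scale)))"
proof -
  have ms: "module scale" using assms(1) unfolding graded_module_def by auto
  interpret module scale by fact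
  have sU: "subspace U" using assms(2) unfolding graded_submodule_def by auto
  have sJ: "subspace (Jgr MG scale)" by (rule Jgr_subspace[OF ms])
  have sUJ: "subspace (set_plus U (Jgr MG scale))" by (rule set_plus_subspace[OF ms sU sJ])
  have UUJ: "U \<subseteq> set_plus U (Jgr MG scale)"
  proof
    fix x assume "x \<in> U"
    then have "x + 0 \<in> set_plus U (Jgr MG scale)" using subspace_0[OF sJ] by (intro set_plusI)
    then show "x \<in> set_plus U (Jgr MG scale)" by simp
  qed
  have JUJ: "Jgr MG scale \<subseteq> set_plus U (Jgr MG scale)"
  proof
    fix x assume "x \<in> Jgr MG scale"
    then have "0 + x \<in> set_plus U (Jgr MG scale)" using subspace_0[OF sU] by (intro set_plusI)
    then show "x \<in> set_plus U (Jgr MG scale)" by simp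
  qed
  show ?thesis
  proof
    assume W: "graded_weakly_Jgr_semiprime RG MG scale U"
    show "\<forall>K. graded_submodule MG scale K \<longrightarrow>
      (\<forall>r\<in>homog RG. \<forall>n::nat. n > 0 \<longrightarrow>
         ideal_smult scale (ideal_pow (pideal r) n) K \<noteq> {0} \<longrightarrow>
         ideal_smult scale (ideal_pow (pideal r) n) K \<subseteq> U \<longrightarrow>
         ideal_smult scale (pideal r) K \<subseteq> set_plus U (Jgr MG scale))"
    proof (intro allI impI ballI)
      fix K r and n :: nat
      assume K: "graded_submodule MG scale K" and r: "r \<in> homog RG" and n: "n > 0"
        and sub: "ideal_smult scale (ideal_pow (pideal r) n) K \<subseteq> U"
      have sK: "subspace K" and dK: "is_direct_sum K (\<lambda>g. K \<inter> MG g)"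
        using K unfolding graded_submodule_def by auto
      have sub': "scale (r ^ n) k \<in> U" if "k \<in> K" for k
      proof -
        have "scale (r ^ n) k \<in> (\<lambda>k. scale (r ^ n) k) ` K" using that by (rule imageI)
        then show ?thesis using sub unfolding ideal_pow_pideal ideal_smult_pideal[OF ms sK] by (rule subsetD[rotated])
      qed
      show "ideal_smult scale (pideal r) K \<subseteq> set_plus U (Jgr MG scale)"
        unfolding ideal_smult_pideal[OF ms sK]
      proof clarify
        fix k assume k: "k \<in> K"
        obtain f where f: "finite {g. f g \<noteq> 0}" "\<forall>g. f g \<in> K \<inter> MG g" "k = (\<Sum>g | f g \<noteq> 0. f g)"
          using dK k unfolding is_direct_sum_def by blast
        have each: "scale r (f g) \<in> set_plus U (Jgr MG scale)" for g
        proof (cases "scale (r ^ n) (f g) = 0")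
          case True
          have "f g \<in> homog MG" using f(2) unfolding homog_def by auto
          then show ?thesis by (rule subsetD[OF JUJ key[OF assms(1) r _ True]])
        next
          case False
          have fh: "f g \<in> homog MG" using f(2) unfolding homog_def by auto
          have fU: "scale (r ^ n) (f g) \<in> U" using sub' f(2) by blast
          have Wc: "\<forall>r\<in>homog RG. \<forall>m\<in>homog MG. \<forall>n::nat. n > 0 \<longrightarrow>
              scale (r ^ n) m \<noteq> 0 \<longrightarrow> scale (r ^ n) m \<in> U \<longrightarrow>
              scale r m \<in> set_plus U (Jgr MG scale)"
            using W unfolding graded_weakly_Jgr_semiprime_def by (elim conjE)
          show ?thesis using Wc[rule_format, OF r fh n False fU] .
        qed
        have "scale r k = (\<Sum>g | f g \<noteq> 0. scale r (f g))" using f(3) by (simp add: scale_sum_right)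
        also have "\<dots> \<in> set_plus U (Jgr MG scale)" by (rule subspace_sum[OF sUJ each])
        finally show "scale r k \<in> set_plus U (Jgr MG scale)" .
      qed
    qed
  next
    assume H: "\<forall>K. graded_submodule MG scale K \<longrightarrow>
      (\<forall>r\<in>homog RG. \<forall>n::nat. n > 0 \<longrightarrow>
         ideal_smult scale (ideal_pow (pideal r) n) K \<noteq> {0} \<longrightarrow>
         ideal_smult scale (ideal_pow (pideal r) n) K \<subseteq> U \<longrightarrow>
         ideal_smult scale (pideal r) K \<subseteq> set_plus U (Jgr MG scale))"
    show "graded_weakly_Jgr_semiprime RG MG scale U"
      unfolding graded_weakly_Jgr_semiprime_def
    proof (intro conjI ballI allI impI)
      show "graded_submodule MG scale U" by fact
      show "U \<noteq> UNIV" by fact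
      fix r m and n :: nat
      assume r: "r \<in> homog RG" and m: "m \<in> homog MG" and n: "n > 0"
        and nz: "scale (r ^ n) m \<noteq> 0" and inU: "scale (r ^ n) m \<in> U"
      obtain g where mg: "m \<in> MG g" using m unfolding homog_def by auto
      define K where "K = range (\<lambda>s. scale s m)"
      have gK: "graded_submodule MG scale K" unfolding K_def by (rule cyclic_graded[OF assms(1) mg])
      have sK: "subspace K" using gK unfolding graded_submodule_def by auto
      have mK: "m \<in> K" unfolding K_def by (auto intro!: image_eqI[of _ _ 1])
      have eq: "ideal_smult scale (ideal_pow (pideal r) n) K = (\<lambda>k. scale (r ^ n) k) ` K"
        unfolding ideal_pow_pideal ideal_smult_pideal[OF ms sK] ..
      have "ideal_smult scale (ideal_pow (pideal r) n) K \<noteq> {0}"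
        unfolding eq using mK nz by blast
      moreover have "ideal_smult scale (ideal_pow (pideal r) n) K \<subseteq> U"
      proof
        fix x assume "x \<in> ideal_smult scale (ideal_pow (pideal r) n) K"
        then have "x \<in> (\<lambda>k. scale (r ^ n) k) ` K" by (simp only: eq)
        then obtain t where "x = scale (r ^ n) (scale t m)" unfolding K_def by blast
        then have "x = scale t (scale (r ^ n) m)" by (simp add: mult.commute)
        then show "x \<in> U" using subspace_scale[OF sU inU] by simp
      qed
      ultimately have "ideal_smult scale (pideal r) K \<subseteq> set_plus U (Jgr MG scale)"
        using H[rule_format, OF gK r n] by blast
      then show "scale r m \<in> set_plus U (Jgr MG scale)"
        unfolding ideal_smult_pideal[OF ms sK] using mK by blast
    qed
  qed
qed

end
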